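(* Let $(G,\alpha)$ be a finite Hom-group, $\mathbb{K}$ a field, and $\mathbb{K}G$ the Hom-group Hopf algebra. If $A$ is a Hom-sub-Hopf algebra of $\mathbb{K}G$, then $\dim_{\mathbb{K}}(A)$ divides $|G|$.
   Context: A Hom-group is a tuple $(G,\mu,1,\alpha)$ where $G$ is a set, $\mu:G\times G\to G$ is a binary operation written $\mu(g,h)=gh$, $1\in G$ is a distinguished element, and $\alpha:G\to G$ is a bijection, such that: (1) Hom-associativity: $\alpha(g)(hk)=(gh)\alpha(k)$ for all $g,h,k\in G$; (2) $\alpha(gk)=\alpha(g)\alpha(k)$ for all $g,k$; (3) Hom-unitality: $g1=1g=\alpha(g)$ for all $g$, and $\alpha(1)=1$; (4) for every $g\in G$ there exists $g^{-1}\in G$ with $gg^{-1}=g^{-1}g=1$ (such an inverse is unique). The Hom-group Hopf algebra $\mathbb{K}G$ is the $\mathbb{K}$-vector space with basis $G$, with multiplication the bilinear extension of that of $G$, unit $1$, twisting map the linear extension of $\alpha$, comultiplication $\Delta(g)=g\otimes g$, counit $\varepsilon(g)=1$, antipode $S(g)=g^{-1}$ (extended linearly), and coalgebra twisting map $\mathrm{Id}$. A Hom-sub-Hopf algebra of $\mathbb{K}G$ is a subspace $A$ containing $1$ with $AA\subseteq A$, $\alpha(A)= A$, $\Delta(A)\subseteq A\otimes A$, and $S(A)\subseteq A$, so that $A$ with the restricted structure maps is itself a Hom-Hopf algebra. *)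

theory Defs
  imports Main "HOL.Vector_Spaces" "HOL-Library.Function_Algebras"
begin

definition hom_group :: "'g set \<Rightarrow> ('g \<Rightarrow> 'g \<Rightarrow> 'g) \<Rightarrow> 'g \<Rightarrow> ('g \<Rightarrow> 'g) \<Rightarrow> bool" where
  "hom_group G mu e alpha \<longleftrightarrow>
     (\<forall>g\<in>G. \<forall>h\<in>G. mu g h \<in> G) \<and> e \<in> G \<and> bij_betw alpha G G \<and>
     (\<forall>g\<in>G. \<forall>h\<in>G. \<forall>k\<in>G. mu (alpha g) (mu h k) = mu (mu g h) (alpha k)) \<and>
     (\<forall>g\<in>G. \<forall>k\<in>G. alpha (mu g k) = mu (alpha g) (alpha k)) \<and>
     (\<forall>g\<in>G. mu g e = alpha g \<and> mu e g = alpha g) \<and> alpha e = e \<and>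
     (\<forall>g\<in>G. \<exists>h\<in>G. mu g h = e \<and> mu h g = e)"

definition hg_inv :: "'g set \<Rightarrow> ('g \<Rightarrow> 'g \<Rightarrow> 'g) \<Rightarrow> 'g \<Rightarrow> 'g \<Rightarrow> 'g" where
  "hg_inv G mu e g = (SOME h. h \<in> G \<and> mu g h = e \<and> mu h g = e)"

text \<open>The group algebra KG, elements represented by their coefficient functions
 G \<rightarrow> K (zero outside G).  An element f corresponds to the sum of f g * g over g in G.\<close>
definition KG :: "'g set \<Rightarrow> ('g \<Rightarrow> 'k::field) set" where
  "KG G = {f. \<forall>x. x \<notin> G \<longrightarrow> f x = 0}"

definition kg_scale :: "'k::field \<Rightarrow> ('g \<Rightarrow> 'k) \<Rightarrow> ('g \<Rightarrow> 'k)" where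
  "kg_scale c f = (\<lambda>x. c * f x)"

definition kg_basis :: "'g \<Rightarrow> ('g \<Rightarrow> 'k::field)" where
  "kg_basis g = (\<lambda>x. if x = g then 1 else 0)"

definition kg_mult :: "'g set \<Rightarrow> ('g \<Rightarrow> 'g \<Rightarrow> 'g) \<Rightarrow> ('g \<Rightarrow> 'k::field) \<Rightarrow> ('g \<Rightarrow> 'k) \<Rightarrow> ('g \<Rightarrow> 'k)" where
  "kg_mult G mu f h = (\<lambda>x. \<Sum>p\<in>{p\<in>G \<times> G. mu (fst p) (snd p) = x}. f (fst p) * h (snd p))"

definition kg_alpha :: "'g set \<Rightarrow> ('g \<Rightarrow> 'g) \<Rightarrow> ('g \<Rightarrow> 'k::field) \<Rightarrow> ('g \<Rightarrow> 'k)" where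
  "kg_alpha G alpha f = (\<lambda>x. \<Sum>g\<in>{g\<in>G. alpha g = x}. f g)"

definition kg_S :: "'g set \<Rightarrow> ('g \<Rightarrow> 'g \<Rightarrow> 'g) \<Rightarrow> 'g \<Rightarrow> ('g \<Rightarrow> 'k::field) \<Rightarrow> ('g \<Rightarrow> 'k)" where
  "kg_S G mu e f = (\<lambda>x. \<Sum>g\<in>{g\<in>G. hg_inv G mu e g = x}. f g)"

text \<open>Comultiplication Delta(g) = g \<otimes> g, with KG \<otimes> KG represented as
 coefficient functions on G \<times> G (basis g \<otimes> h).\<close>
definition kg_Delta :: "('g \<Rightarrow> 'k::field) \<Rightarrow> ('g \<times> 'g \<Rightarrow> 'k)" where
  "kg_Delta f = (\<lambda>(x, y). if x = y then f x else 0)"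

text \<open>A \<otimes> A as a subspace of KG \<otimes> KG: the span of the simple tensors a \<otimes> b.\<close>
definition tensor_sq :: "('g \<Rightarrow> 'k::field) set \<Rightarrow> ('g \<times> 'g \<Rightarrow> 'k) set" where
  "tensor_sq A = {F. \<exists>(n::nat) c a b. (\<forall>i<n. a i \<in> A \<and> b i \<in> A) \<and>
      F = (\<lambda>(x, y). \<Sum>i<n. c i * a i x * b i y)}"

definition hom_sub_hopf :: "'g set \<Rightarrow> ('g \<Rightarrow> 'g \<Rightarrow> 'g) \<Rightarrow> 'g \<Rightarrow> ('g \<Rightarrow> 'g)
     \<Rightarrow> ('g \<Rightarrow> 'k::field) set \<Rightarrow> bool" where
  "hom_sub_hopf G mu e alpha A \<longleftrightarrow>
     A \<subseteq> KG G \<and> module.subspace kg_scale A \<and>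
     kg_basis e \<in> A \<and>
     (\<forall>f\<in>A. \<forall>h\<in>A. kg_mult G mu f h \<in> A) \<and>
     kg_alpha G alpha ` A = A \<and>
     (\<forall>f\<in>A. kg_Delta f \<in> tensor_sq A) \<and>
     (\<forall>f\<in>A. kg_S G mu e f \<in> A)"

definition kg_dim :: "('g \<Rightarrow> 'k::field) set \<Rightarrow> nat" where
  "kg_dim A = vector_space.dim kg_scale A"

end

theory Submission
  imports Defs "HOL-Algebra.Coset"
begin

lemma sum_fun_app: "(sum f S) x = sum (\<lambda>i. f i x) S"
  by (induction S rule: infinite_finite_induct) auto

lemma vs_kg: "vector_space (kg_scale :: 'k::field \<Rightarrow> ('g \<Rightarrow> 'k) \<Rightarrow> _)"
  by unfold_locales (auto simp: kg_scale_def algebra_simps)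

lemma hom_group_lagrange:
  assumes fin: "finite G" and hg: "hom_group G mu e alpha"
    and HG: "H \<subseteq> G" and eH: "e \<in> H"
    and mcl: "\<And>g h. g \<in> H \<Longrightarrow> h \<in> H \<Longrightarrow> inv_into G alpha (mu g h) \<in> H"
    and icl: "\<And>g. g \<in> H \<Longrightarrow> \<exists>h\<in>H. mu h g = e"
  shows "card H dvd card G"
proof -
  note d = hg[unfolded hom_group_def]
  have cl: "\<And>g h. g \<in> G \<Longrightarrow> h \<in> G \<Longrightarrow> mu g h \<in> G" using d by blast
  have eG: "e \<in> G" using d by blast
  have bij: "bij_betw alpha G G" using d by blast
  have ha: "\<And>g h k. g \<in> G \<Longrightarrow> h \<in> G \<Longrightarrow> k \<in> G \<Longrightarrow> mu (alpha g) (mu h k) = mu (mu g h) (alpha k)"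
    using d by blast
  have am: "\<And>g k. g \<in> G \<Longrightarrow> k \<in> G \<Longrightarrow> alpha (mu g k) = mu (alpha g) (alpha k)" using d by blast
  have un: "\<And>g. g \<in> G \<Longrightarrow> mu e g = alpha g" using d by blast
  have ae: "alpha e = e" using d by blast
  define ai where "ai = inv_into G alpha"
  have surj: "alpha ` G = G" and inj: "inj_on alpha G" using bij by (auto simp: bij_betw_def)
  have aiG: "\<And>x. x \<in> G \<Longrightarrow> ai x \<in> G" unfolding ai_def by (metis inv_into_into surj)
  have aai: "\<And>x. x \<in> G \<Longrightarrow> alpha (ai x) = x" unfolding ai_def by (metis f_inv_into_f surj)
  have iaa: "\<And>x. x \<in> G \<Longrightarrow> ai (alpha x) = x" unfolding ai_def by (metis inv_into_f_f inj)
  have aie: "ai e = e" using iaa[OF eG] ae by simp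
  define GR where "GR = \<lparr>carrier = G, monoid.mult = (\<lambda>g h. ai (mu g h)), one = e\<rparr>"
  have grp: "group GR"
  proof (rule groupI)
    fix x y assume "x \<in> carrier GR" "y \<in> carrier GR"
    then show "x \<otimes>\<^bsub>GR\<^esub> y \<in> carrier GR" by (simp add: GR_def aiG cl)
  next
    show "\<one>\<^bsub>GR\<^esub> \<in> carrier GR" by (simp add: GR_def eG)
  next
    fix x y z assume xyz: "x \<in> carrier GR" "y \<in> carrier GR" "z \<in> carrier GR"
    hence x: "x \<in> G" and y: "y \<in> G" and z: "z \<in> G" by (auto simp: GR_def)
    define L where "L = ai (mu (ai (mu x y)) z)"
    define R where "R = ai (mu x (ai (mu y z)))"
    have LG: "L \<in> G" unfolding L_def by (simp add: aiG cl x y z)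
    have RG: "R \<in> G" unfolding R_def by (simp add: aiG cl x y z)
    have "alpha (alpha L) = mu (mu x y) (alpha z)"
      unfolding L_def using x y z by (simp add: aai aiG cl am)
    also have "\<dots> = mu (alpha x) (mu y z)" using ha x y z by simp
    also have "\<dots> = alpha (alpha R)"
      unfolding R_def using x y z by (simp add: aai aiG cl am)
    finally have "alpha (alpha L) = alpha (alpha R)" .
    hence "alpha L = alpha R"
      using inj LG RG bij_betw_apply[OF bij] by (meson inj_onD)
    hence "L = R" using inj LG RG by (meson inj_onD)
    then show "x \<otimes>\<^bsub>GR\<^esub> y \<otimes>\<^bsub>GR\<^esub> z = x \<otimes>\<^bsub>GR\<^esub> (y \<otimes>\<^bsub>GR\<^esub> z)"
      by (simp add: GR_def L_def R_def)
  next
    fix x assume "x \<in> carrier GR"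
    then show "\<one>\<^bsub>GR\<^esub> \<otimes>\<^bsub>GR\<^esub> x = x" by (simp add: GR_def un iaa)
  next
    fix x assume x: "x \<in> carrier GR"
    hence xG: "x \<in> G" by (simp add: GR_def)
    then obtain h where h: "h \<in> G" "mu h x = e" using d by blast
    then have "h \<otimes>\<^bsub>GR\<^esub> x = \<one>\<^bsub>GR\<^esub>" by (simp add: GR_def aie)
    then show "\<exists>y\<in>carrier GR. y \<otimes>\<^bsub>GR\<^esub> x = \<one>\<^bsub>GR\<^esub>"
      using h by (auto simp: GR_def)
  qed
  interpret group GR by (rule grp)
  have sub: "subgroup H GR"
  proof (rule subgroupI)
    show "H \<subseteq> carrier GR" using HG by (simp add: GR_def)
    show "H \<noteq> {}" using eH by blast
  next
    fix a assume a: "a \<in> H"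
    then obtain h where h: "h \<in> H" "mu h a = e" using icl by blast
    have "h \<otimes>\<^bsub>GR\<^esub> a = \<one>\<^bsub>GR\<^esub>" using h by (simp add: GR_def aie)
    hence "inv\<^bsub>GR\<^esub> a = h" using inv_equality a h HG by (auto simp: GR_def)
    then show "inv\<^bsub>GR\<^esub> a \<in> H" using h by simp
  next
    fix a b assume "a \<in> H" "b \<in> H"
    then show "a \<otimes>\<^bsub>GR\<^esub> b \<in> H" using mcl by (simp add: GR_def ai_def)
  qed
  have "card (rcosets\<^bsub>GR\<^esub> H) * card H = order GR" using lagrange[OF sub] .
  moreover have "order GR = card G" by (simp add: order_def GR_def)
  ultimately show ?thesis by (metis dvd_triv_right)
qed

theorem mainTheorem12:
  fixes G :: "'g set" and mu :: "'g \<Rightarrow> 'g \<Rightarrow> 'g" and e :: 'g and alpha :: "'g \<Rightarrow> 'g"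
    and A :: "('g \<Rightarrow> 'k::field) set"
  assumes "finite G"
    and "hom_group G mu e alpha"
    and "hom_sub_hopf G mu e alpha A"
  shows "kg_dim A dvd card G"
proof -
  interpret vs: vector_space "kg_scale :: 'k \<Rightarrow> ('g \<Rightarrow> 'k) \<Rightarrow> _" by (rule vs_kg)
  note hs = assms(3)[unfolded hom_sub_hopf_def]
  have AKG: "A \<subseteq> KG G" and sA: "vs.subspace A" and eA: "kg_basis e \<in> A"
    and mA: "\<And>f h. f \<in> A \<Longrightarrow> h \<in> A \<Longrightarrow> kg_mult G mu f h \<in> A"
    and alA: "kg_alpha G alpha ` A = A"
    and DA: "\<And>f. f \<in> A \<Longrightarrow> kg_Delta f \<in> tensor_sq A"
    and SA: "\<And>f. f \<in> A \<Longrightarrow> kg_S G mu e f \<in> A" using hs by auto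
  have key: "kg_basis z \<in> A" if f: "f \<in> A" and fz: "f z \<noteq> 0" for f z
  proof -
    have "\<exists>(n::nat) c a b. (\<forall>i<n. a i \<in> A \<and> b i \<in> A) \<and>
      kg_Delta f = (\<lambda>(x, y). \<Sum>i<n. c i * a i x * b i y)"
      using DA[OF f] unfolding tensor_sq_def by (rule CollectD)
    then obtain n :: nat and c a b where ab: "\<forall>i<n. a i \<in> A \<and> b i \<in> A"
      and D: "kg_Delta f = (\<lambda>(x, y). \<Sum>i<n. c i * a i x * b i y)"
      by blast
    define F where "F = (\<Sum>i<n. kg_scale (c i * a i z) (b i))"
    have FA: "F \<in> A" unfolding F_def
      by (rule vs.subspace_sum[OF sA]) (use ab vs.subspace_scale[OF sA] in auto)
    have "F y = (if z = y then f z else 0)" for y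
    proof -
      have "kg_Delta f (z, y) = (if z = y then f z else 0)" by (simp add: kg_Delta_def)
      moreover have "kg_Delta f (z, y) = (\<Sum>i<n. c i * a i z * b i y)" using D by simp
      ultimately show ?thesis by (simp add: F_def sum_fun_app kg_scale_def)
    qed
    hence "kg_basis z = kg_scale (inverse (f z)) F"
      using fz by (auto simp: kg_basis_def kg_scale_def fun_eq_iff)
    then show ?thesis using vs.subspace_scale[OF sA FA] by simp
  qed
  have basisG: "z \<in> G" if "kg_basis z \<in> A" for z
    using that AKG unfolding KG_def kg_basis_def by force
  note d = assms(2)[unfolded hom_group_def]
  have bij: "bij_betw alpha G G" using d by blast
  have surj: "alpha ` G = G" and inj: "inj_on alpha G" using bij by (auto simp: bij_betw_def)
  have cl: "\<And>g h. g \<in> G \<Longrightarrow> h \<in> G \<Longrightarrow> mu g h \<in> G" using d by blast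
  define H where "H = {g. kg_basis g \<in> A}"
  have HG: "H \<subseteq> G" using basisG H_def by blast
  have finH: "finite H" using HG assms(1) finite_subset by blast
  have eH: "e \<in> H" using eA H_def by simp
  have mcl: "inv_into G alpha (mu g h) \<in> H" if g: "g \<in> H" and h: "h \<in> H" for g h
  proof -
    have gG: "g \<in> G" and hG: "h \<in> G" using g h HG by auto
    have M: "kg_mult G mu (kg_basis g) (kg_basis h) \<in> A" using mA g h H_def by simp
    have "kg_mult G mu (kg_basis g :: 'g \<Rightarrow> 'k) (kg_basis h) (mu g h)
       = (\<Sum>p\<in>{p\<in>G \<times> G. mu (fst p) (snd p) = mu g h}. if p = (g, h) then 1 else 0)"
      unfolding kg_mult_def by (rule sum.cong) (auto simp: kg_basis_def)
    also have "\<dots> = 1" using gG hG assms(1) by (subst sum.delta) auto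
    finally have "kg_basis (mu g h) \<in> A" using key[OF M, of "mu g h"] by simp
    then obtain f where fA: "f \<in> A" and fa: "kg_alpha G alpha f = kg_basis (mu g h)"
      using alA by (metis imageE)
    define y where "y = inv_into G alpha (mu g h)"
    have yG: "y \<in> G" unfolding y_def by (metis inv_into_into surj cl gG hG)
    have ay: "alpha y = mu g h" unfolding y_def by (metis f_inv_into_f surj cl gG hG)
    have "{g'\<in>G. alpha g' = mu g h} = {y}" using yG ay inj by (auto simp: inj_on_def)
    hence "kg_alpha G alpha f (mu g h) = f y" by (simp add: kg_alpha_def)
    hence "f y = 1" using fa by (simp add: kg_basis_def)
    then show ?thesis using key[OF fA] H_def y_def by simp
  qed
  have icl: "\<exists>h\<in>H. mu h g = e" if g: "g \<in> H" for g
  proof -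
    have gG: "g \<in> G" using g HG by auto
    have ex: "\<exists>h. h \<in> G \<and> mu g h = e \<and> mu h g = e" using d gG by blast
    define y where "y = hg_inv G mu e g"
    have y: "y \<in> G \<and> mu g y = e \<and> mu y g = e"
      unfolding y_def hg_inv_def by (rule someI_ex[OF ex])
    have SB: "kg_S G mu e (kg_basis g) \<in> A" using SA g H_def by simp
    have "kg_S G mu e (kg_basis g :: 'g \<Rightarrow> 'k) y
       = (\<Sum>g'\<in>{g'\<in>G. hg_inv G mu e g' = y}. if g' = g then 1 else 0)"
      unfolding kg_S_def by (rule sum.cong) (auto simp: kg_basis_def)
    also have "\<dots> = 1" using gG assms(1) y_def by (subst sum.delta) auto
    finally have "y \<in> H" using key[OF SB] H_def by simp
    then show ?thesis using y by blast
  qed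
  have cardH: "card H dvd card G"
    by (rule hom_group_lagrange[OF assms(1,2) HG eH mcl icl])
  define B :: "('g \<Rightarrow> 'k) set" where "B = kg_basis ` H"
  have BA: "B \<subseteq> A" using B_def H_def by auto
  have "A \<subseteq> vs.span B"
  proof
    fix f assume fA: "f \<in> A"
    have fKG: "f \<in> KG G" using fA AKG by auto
    let ?S = "{g\<in>G. f g \<noteq> 0}"
    have "f = (\<Sum>g\<in>?S. kg_scale (f g) (kg_basis g))"
    proof
      fix x
      have "(\<Sum>g\<in>?S. kg_scale (f g) (kg_basis g)) x = (\<Sum>g\<in>?S. if g = x then f x else 0)"
        by (simp add: sum_fun_app kg_scale_def kg_basis_def) (rule sum.cong, auto)
      also have "\<dots> = f x" using assms(1) fKG by (subst sum.delta) (auto simp: KG_def)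
      finally show "f x = (\<Sum>g\<in>?S. kg_scale (f g) (kg_basis g)) x" by simp
    qed
    moreover have "(\<Sum>g\<in>?S. kg_scale (f g) (kg_basis g)) \<in> vs.span B"
    proof (rule vs.span_sum)
      fix g assume "g \<in> ?S"
      hence "kg_basis g \<in> B" using key[OF fA] B_def H_def by auto
      then show "kg_scale (f g) (kg_basis g) \<in> vs.span B"
        by (intro vs.span_scale vs.span_base)
    qed
    ultimately show "f \<in> vs.span B" by simp
  qed
  moreover have "vs.span B \<subseteq> A" using vs.span_minimal[OF BA sA] .
  ultimately have AB: "A = vs.span B" by blast
  have injb: "inj_on (kg_basis :: 'g \<Rightarrow> 'g \<Rightarrow> 'k) H"
    by (rule inj_onI) (metis kg_basis_def zero_neq_one)
  have finB: "finite B" using finH B_def by simp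
  have indep: "vs.independent B"
  proof
    assume "vs.dependent B"
    then obtain u v where v: "v \<in> B" "u v \<noteq> 0" and s: "(\<Sum>v\<in>B. kg_scale (u v) v) = 0"
      using vs.dependent_finite[OF finB] by blast
    obtain g where g: "g \<in> H" "v = kg_basis g" using v B_def by blast
    have "(\<Sum>w\<in>B. kg_scale (u w) w) g = (\<Sum>w\<in>B. if w = v then u v else 0)"
      unfolding sum_fun_app kg_scale_def
    proof (rule sum.cong)
      fix w assume "w \<in> B"
      then obtain h where h: "h \<in> H" "w = kg_basis h" using B_def by blast
      show "u w * w g = (if w = v then u v else 0)"
      proof (cases "h = g")
        case True then show ?thesis using h g by (simp add: kg_basis_def)
      next
        case False
        then have "w \<noteq> v" using h g injb unfolding inj_on_def by blast
        then show ?thesis using h g False by (simp add: kg_basis_def)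
      qed
    qed simp
    also have "\<dots> = u v" using v finB by (subst sum.delta) auto
    finally show False using s v by simp
  qed
  have "kg_dim A = card B" unfolding kg_dim_def AB using vs.dim_span_eq_card_independent[OF indep] .
  also have "\<dots> = card H" unfolding B_def using card_image[OF injb] .
  finally show ?thesis using cardH by simp
qed

end
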